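(* (Convergence of the one-dimensional Crank–Nicolson collocation scheme.) Consider the nonlocal problem $$\partial_t u(x,t)+\int_a^b\frac{u(x,t)-u(y,t)}{|x-y|^{\gamma}}\,dy=f(x,t),\qquad (x,t)\in(a,b)\times(0,T],$$ with $0<\gamma<1$, Dirichlet boundary values $u(a,t),u(b,t)$ and initial value $u(x,0)=u_0(x)$, and let $U^k\in\mathbb R^{2M-1}$, $k=0,\dots,N$, be the Crank–Nicolson collocation approximation defined in the context. Assume the exact solution $u$ is smooth enough that the truncation residual satisfies $|R^{k-1/2}_i|\le C_R(\tau^2+h^{4-\gamma})$ for all $i=1,\dots,2M-1$, $k=1,\dots,N$, with a constant $C_R$ independent of $\tau,h,i,k$. Then, with $C_a=\frac{2(b-a)^{1-\gamma}}{1-\gamma}$, $$\max_{1\le i\le 2M-1}\big|u(x_{i/2},t_k)-U^k_i\big|\le C_R\,T\,e^{TC_a}\,(\tau^2+h^{4-\gamma}),\qquad k=0,1,\dots,N;$$ that is, the error is $\mathcal O(\tau^2+h^{4-\gamma})$.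
   Context: Fix real numbers $a<b$, an exponent $\gamma\in(0,1)$ and an integer $M\ge 2$. Set $h=(b-a)/M$ and $x_s=a+sh$ for $s\in\{0,\tfrac12,1,\tfrac32,\dots,M\}$. The piecewise quadratic Lagrange basis functions on $[a,b]$ are: for integers $0\le l\le M$, $\phi_l(x)=\frac{x-x_{l-1}}{h}\cdot\frac{2x-(x_l+x_{l-1})}{h}$ for $x\in[x_{l-1},x_l]\cap[a,b]$, $\phi_l(x)=\frac{x_{l+1}-x}{h}\cdot\frac{(x_{l+1}+x_l)-2x}{h}$ for $x\in[x_l,x_{l+1}]\cap[a,b]$, and $\phi_l(x)=0$ otherwise; and for $l=1,\dots,M$, $\phi_{l-\frac12}(x)=\frac{4(x-x_{l-1})(x_l-x)}{h^2}$ for $x\in[x_{l-1},x_l]$ and $0$ otherwise. For $i\in\{1,\dots,2M-1\}$ and $j\in\{0,1,\dots,2M\}$ define $$d_i=\int_a^b\frac{dy}{|x_{i/2}-y|^{\gamma}},\qquad g_{ij}=\int_a^b\frac{\phi_{j/2}(y)}{|x_{i/2}-y|^{\gamma}}\,dy .$$ The one-dimensional collocation matrix is the $(2M-1)\times(2M-1)$ matrix $\mathcal A$ with entries $A_{ij}=\delta_{ij}d_i-g_{ij}$, $i,j\in\{1,\dots,2M-1\}$. The following fact, established in earlier work, may be used: $g_{ij}>0$ for all $i,j\in\{1,\dots,2M-1\}$, and $\mathcal A$ is strictly diagonally dominant by rows. Time discretization: $T>0$, $N\ge1$, $\tau=T/N$, $t_k=k\tau$, $t_{k-1/2}=(t_{k-1}+t_k)/2$.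 The Crank–Nicolson collocation scheme: $U^0_i=u_0(x_{i/2})$, and for $k=1,\dots,N$, $$\Big(I+\frac{\tau}{2}\mathcal A\Big)U^k=\Big(I-\frac{\tau}{2}\mathcal A\Big)U^{k-1}+\tau F^{k-1/2}+\tau K^{k-1/2},$$ where $F^{k-1/2}_i=f(x_{i/2},t_{k-1/2})$ and $K^{k-1/2}_i=\tfrac12 g_{i,0}\big(u(a,t_{k-1})+u(a,t_k)\big)+\tfrac12 g_{i,2M}\big(u(b,t_{k-1})+u(b,t_k)\big)$ (boundary contributions). The truncation residual $R^{k-1/2}\in\mathbb R^{2M-1}$ is defined by inserting the exact nodal values $u^k=(u(x_{i/2},t_k))_{i=1}^{2M-1}$ into the scheme: $$\tau R^{k-1/2}=\Big(I+\frac{\tau}{2}\mathcal A\Big)u^k-\Big(I-\frac{\tau}{2}\mathcal A\Big)u^{k-1}-\tau F^{k-1/2}-\tau K^{k-1/2}.$$ *)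

theory Defs
  imports "HOL-Analysis.Analysis"
begin

definition mesh_h :: "real \<Rightarrow> real \<Rightarrow> nat \<Rightarrow> real" where
  "mesh_h a b M = (b - a) / real M"

definition xnode :: "real \<Rightarrow> real \<Rightarrow> nat \<Rightarrow> real \<Rightarrow> real" where
  "xnode a b M s = a + s * mesh_h a b M"

text \<open>Piecewise quadratic Lagrange basis function phi_{j/2}, j = 0..2M.\<close>

definition phi :: "real \<Rightarrow> real \<Rightarrow> nat \<Rightarrow> nat \<Rightarrow> real \<Rightarrow> real" where
  "phi a b M j x =
    (let h = mesh_h a b M; X = xnode a b M in
     if even j then
       (let l = real (j div 2) in
        if a \<le> x \<and> x \<le> b \<and> X (l - 1) \<le> x \<and> x \<le> X l then
          (x - X (l - 1)) / h * ((2 * x - (X l + X (l - 1))) / h)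
        else if a \<le> x \<and> x \<le> b \<and> X l \<le> x \<and> x \<le> X (l + 1) then
          (X (l + 1) - x) / h * (((X (l + 1) + X l) - 2 * x) / h)
        else 0)
     else
       (let l = real ((j + 1) div 2) in
        if X (l - 1) \<le> x \<and> x \<le> X l then
          4 * (x - X (l - 1)) * (X l - x) / h\<^sup>2
        else 0))"

definition dcoef :: "real \<Rightarrow> real \<Rightarrow> real \<Rightarrow> nat \<Rightarrow> nat \<Rightarrow> real" where
  "dcoef a b \<gamma> M i =
     integral {a..b} (\<lambda>y. 1 / \<bar>xnode a b M (real i / 2) - y\<bar> powr \<gamma>)"

definition gcoef :: "real \<Rightarrow> real \<Rightarrow> real \<Rightarrow> nat \<Rightarrow> nat \<Rightarrow> nat \<Rightarrow> real" where
  "gcoef a b \<gamma> M i j =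
     integral {a..b} (\<lambda>y. phi a b M j y / \<bar>xnode a b M (real i / 2) - y\<bar> powr \<gamma>)"

definition Acoll :: "real \<Rightarrow> real \<Rightarrow> real \<Rightarrow> nat \<Rightarrow> nat \<Rightarrow> nat \<Rightarrow> real" where
  "Acoll a b \<gamma> M i j = (if i = j then dcoef a b \<gamma> M i else 0) - gcoef a b \<gamma> M i j"

definition Amul :: "real \<Rightarrow> real \<Rightarrow> real \<Rightarrow> nat \<Rightarrow> (nat \<Rightarrow> real) \<Rightarrow> nat \<Rightarrow> real" where
  "Amul a b \<gamma> M v i = (\<Sum>j = 1..2 * M - 1. Acoll a b \<gamma> M i j * v j)"

definition Kbd :: "real \<Rightarrow> real \<Rightarrow> real \<Rightarrow> nat \<Rightarrow> (real \<Rightarrow> real \<Rightarrow> real) \<Rightarrow> real \<Rightarrow> nat \<Rightarrow> nat \<Rightarrow> real" where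
  "Kbd a b \<gamma> M u \<tau> k i =
     1/2 * gcoef a b \<gamma> M i 0 * (u a (real (k - 1) * \<tau>) + u a (real k * \<tau>))
   + 1/2 * gcoef a b \<gamma> M i (2 * M) * (u b (real (k - 1) * \<tau>) + u b (real k * \<tau>))"

definition Fsrc :: "real \<Rightarrow> real \<Rightarrow> nat \<Rightarrow> (real \<Rightarrow> real \<Rightarrow> real) \<Rightarrow> real \<Rightarrow> nat \<Rightarrow> nat \<Rightarrow> real" where
  "Fsrc a b M f \<tau> k i = f (xnode a b M (real i / 2)) ((real (k - 1) * \<tau> + real k * \<tau>) / 2)"

definition unodal :: "real \<Rightarrow> real \<Rightarrow> nat \<Rightarrow> (real \<Rightarrow> real \<Rightarrow> real) \<Rightarrow> real \<Rightarrow> nat \<Rightarrow> nat \<Rightarrow> real" where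
  "unodal a b M u \<tau> k i = u (xnode a b M (real i / 2)) (real k * \<tau>)"

definition resid :: "real \<Rightarrow> real \<Rightarrow> real \<Rightarrow> nat \<Rightarrow> (real \<Rightarrow> real \<Rightarrow> real) \<Rightarrow> (real \<Rightarrow> real \<Rightarrow> real)
                     \<Rightarrow> real \<Rightarrow> nat \<Rightarrow> nat \<Rightarrow> real" where
  "resid a b \<gamma> M u f \<tau> k i =
    ((unodal a b M u \<tau> k i + \<tau> / 2 * Amul a b \<gamma> M (unodal a b M u \<tau> k) i)
     - (unodal a b M u \<tau> (k - 1) i - \<tau> / 2 * Amul a b \<gamma> M (unodal a b M u \<tau> (k - 1)) i)
     - \<tau> * Fsrc a b M f \<tau> k i - \<tau> * Kbd a b \<gamma> M u \<tau> k i) / \<tau>"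

definition CN_solution :: "real \<Rightarrow> real \<Rightarrow> real \<Rightarrow> nat \<Rightarrow> nat \<Rightarrow> real \<Rightarrow> (real \<Rightarrow> real)
     \<Rightarrow> (real \<Rightarrow> real \<Rightarrow> real) \<Rightarrow> (real \<Rightarrow> real \<Rightarrow> real) \<Rightarrow> (nat \<Rightarrow> nat \<Rightarrow> real) \<Rightarrow> bool" where
  "CN_solution a b \<gamma> M N \<tau> u0 u f U \<longleftrightarrow>
     (\<forall>i \<in> {1..2 * M - 1}. U 0 i = u0 (xnode a b M (real i / 2))) \<and>
     (\<forall>k \<in> {1..N}. \<forall>i \<in> {1..2 * M - 1}.
        U k i + \<tau> / 2 * Amul a b \<gamma> M (U k) i
        = U (k - 1) i - \<tau> / 2 * Amul a b \<gamma> M (U (k - 1)) i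
          + \<tau> * Fsrc a b M f \<tau> k i + \<tau> * Kbd a b \<gamma> M u \<tau> k i)"

end

theory Submission
  imports Defs
begin

lemma kernel_int:
  fixes a b x g :: real
  assumes "a \<le> x" "x \<le> b" "0 < g" "g < 1"
  shows "((\<lambda>y. 1 / \<bar>x - y\<bar> powr g) has_integral
          (((x - a) powr (1 - g) + (b - x) powr (1 - g)) / (1 - g))) {a..b}"
proof -
  have e: "1 / \<bar>x - y\<bar> powr g = \<bar>x - y\<bar> powr (-g)" for y
    by (simp add: powr_minus_divide)
  have p: "-g > -1" using assms by simp
  have R0: "((\<lambda>t. t powr (-g)) has_integral ((b-x) powr (-g+1) / (-g+1))) {0..b-x}"
    using has_integral_powr_from_0[OF p] assms by simp
  have R1: "((\<lambda>y. (y + - x) powr (-g)) has_integral ((b-x) powr (-g+1) / (-g+1))) {0 - -x..(b-x) - -x}"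
    by (rule has_integral_shift_real_ivl[OF R0])
  have R: "((\<lambda>y. 1 / \<bar>x - y\<bar> powr g) has_integral ((b-x) powr (1-g) / (1-g))) {x..b}"
  proof -
    have "((\<lambda>y. (y + - x) powr (-g)) has_integral ((b-x) powr (1-g) / (1-g))) {x..b}"
      using R1 by (simp add: add.commute)
    then show ?thesis
      by (rule has_integral_spike_finite[of "{}", rotated 2]) (auto simp: e abs_if powr_minus_divide)
  qed
  have L0: "((\<lambda>t. t powr (-g)) has_integral ((x-a) powr (-g+1) / (-g+1))) {0..x-a}"
    using has_integral_powr_from_0[OF p] assms by simp
  have L1: "((\<lambda>t. (-t) powr (-g)) has_integral ((x-a) powr (-g+1) / (-g+1))) {-(x-a)..-0}"
    using L0 by (subst has_integral_reflect_real) 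
  have L2: "((\<lambda>y. (-(y + -x)) powr (-g)) has_integral ((x-a) powr (-g+1) / (-g+1))) {-(x-a) - -x..-0 - -x}"
    by (rule has_integral_shift_real_ivl[OF L1])
  have L: "((\<lambda>y. 1 / \<bar>x - y\<bar> powr g) has_integral ((x-a) powr (1-g) / (1-g))) {a..x}"
  proof -
    have "((\<lambda>y. (-(y + -x)) powr (-g)) has_integral ((x-a) powr (1-g) / (1-g))) {a..x}"
      using L2 by (simp add: add.commute)
    then show ?thesis
      by (rule has_integral_spike_finite[of "{}", rotated 2]) (auto simp: e abs_if powr_minus_divide)
  qed
  show ?thesis using has_integral_combine[OF assms(1,2) L R] by (simp add: add_divide_distrib)
qed
lemma quad_le1:
  fixes p h y :: real
  assumes "h > 0" "p \<le> y" "y \<le> p + h"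
  shows "(y - p) / h * ((2 * y - (p + h + p)) / h) \<le> 1"
proof -
  define t where "t = (y - p) / h"
  have t0: "0 \<le> t" "t \<le> 1" using assms by (auto simp: t_def field_simps)
  have "(2 * y - (p + h + p)) / h = 2 * t - 1" using assms by (simp add: t_def field_simps)
  moreover have "t * (2 * t - 1) \<le> 1"
  proof -
    have "t * (2*t - 1) \<le> t * 1" using t0 by (intro mult_left_mono) auto
    then show ?thesis using t0 by simp
  qed
  ultimately show ?thesis by (simp add: t_def)
qed

lemma quad_le1':
  fixes p h y :: real
  assumes "h > 0" "p \<le> y" "y \<le> p + h"
  shows "(p + h - y) / h * (((p + h) + p - 2 * y) / h) \<le> 1"
proof -
  define t where "t = (p + h - y) / h"
  have t0: "0 \<le> t" "t \<le> 1" using assms by (auto simp: t_def field_simps)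
  have "((p + h) + p - 2 * y) / h = 2 * t - 1" using assms by (simp add: t_def field_simps)
  moreover have "t * (2 * t - 1) \<le> 1"
  proof -
    have "t * (2*t - 1) \<le> t * 1" using t0 by (intro mult_left_mono) auto
    then show ?thesis using t0 by simp
  qed
  ultimately show ?thesis by (simp add: t_def)
qed

lemma bubble_le1:
  fixes p h y :: real
  assumes "h > 0"
  shows "4 * (y - p) * (p + h - y) / h\<^sup>2 \<le> 1"
proof -
  have "4 * (y - p) * (p + h - y) \<le> h\<^sup>2"
  proof -
    have "0 \<le> (2*y - 2*p - h)\<^sup>2" by simp
    then show ?thesis by (simp add: power2_eq_square algebra_simps)
  qed
  then show ?thesis using assms by (simp add: divide_le_eq)
qed

lemma phi_le1:
  assumes "a < b" "M > 0"
  shows "phi a b M j y \<le> 1"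
proof -
  define h where "h = mesh_h a b M"
  have h: "h > 0" using assms by (simp add: h_def mesh_h_def)
  have X: "xnode a b M (l + 1) = xnode a b M l + h" "xnode a b M l = xnode a b M (l - 1) + h" for l
    by (simp_all add: xnode_def h_def algebra_simps)
  show ?thesis
  proof (cases "even j")
    case True
    define P where "P = xnode a b M (real (j div 2) - 1)"
    define Q where "Q = xnode a b M (real (j div 2))"
    define R where "R = xnode a b M (real (j div 2) + 1)"
    have QP: "Q = P + h" using X(2)[of "real (j div 2)"] by (simp add: P_def Q_def)
    have RQ: "R = Q + h" using X(1)[of "real (j div 2)"] by (simp add: R_def Q_def)
    have "phi a b M j y = (if a \<le> y \<and> y \<le> b \<and> P \<le> y \<and> y \<le> Q then
          (y - P) / h * ((2 * y - (Q + P)) / h)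
        else if a \<le> y \<and> y \<le> b \<and> Q \<le> y \<and> y \<le> R then
          (R - y) / h * (((R + Q) - 2 * y) / h)
        else 0)"
      using True unfolding phi_def Let_def h_def P_def Q_def R_def by simp
    then show ?thesis using quad_le1[OF h, of P y] quad_le1'[OF h, of Q y] QP RQ
      by (auto simp: algebra_simps)
  next
    case False
    define P where "P = xnode a b M (real ((j + 1) div 2) - 1)"
    define Q where "Q = xnode a b M (real ((j + 1) div 2))"
    have QP: "Q = P + h" using X(2)[of "real ((j+1) div 2)"] by (simp add: P_def Q_def)
    have "phi a b M j y = (if P \<le> y \<and> y \<le> Q then 4 * (y - P) * (Q - y) / h\<^sup>2 else 0)"
      using False unfolding phi_def Let_def h_def P_def Q_def by simp
    then show ?thesis using bubble_le1[OF h, of y P] QP by auto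
  qed
qed
theorem theorem3p7:
  fixes a b \<gamma> T C_R :: real and M N :: nat
    and u ut f :: "real \<Rightarrow> real \<Rightarrow> real" and u0 :: "real \<Rightarrow> real"
    and U :: "nat \<Rightarrow> nat \<Rightarrow> real"
  assumes ab: "a < b" and gam: "0 < \<gamma>" "\<gamma> < 1" and M2: "M \<ge> 2"
    and T: "T > 0" and N1: "N \<ge> 1"
    and pde: "\<forall>x \<in> {a<..<b}. \<forall>t \<in> {0<..T}.
                 ((\<lambda>s. u x s) has_real_derivative ut x t) (at t) \<and>
                 ut x t + integral {a..b} (\<lambda>y. (u x t - u y t) / \<bar>x - y\<bar> powr \<gamma>) = f x t"
    and init: "\<forall>x \<in> {a..b}. u x 0 = u0 x"
    and gpos: "\<forall>i \<in> {1..2 * M - 1}. \<forall>j \<in> {1..2 * M - 1}. gcoef a b \<gamma> M i j > 0"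
    and diagdom: "\<forall>i \<in> {1..2 * M - 1}.
                    \<bar>Acoll a b \<gamma> M i i\<bar> > (\<Sum>j \<in> {1..2 * M - 1} - {i}. \<bar>Acoll a b \<gamma> M i j\<bar>)"
    and scheme: "CN_solution a b \<gamma> M N (T / real N) u0 u f U"
    and resbound: "\<forall>k \<in> {1..N}. \<forall>i \<in> {1..2 * M - 1}.
        \<bar>resid a b \<gamma> M u f (T / real N) k i\<bar>
          \<le> C_R * ((T / real N)\<^sup>2 + mesh_h a b M powr (4 - \<gamma>))"
  shows "\<forall>k \<in> {0..N}.
     Max ((\<lambda>i. \<bar>u (xnode a b M (real i / 2)) (real k * (T / real N)) - U k i\<bar>) ` {1..2 * M - 1})
       \<le> C_R * T * exp (T * (2 * (b - a) powr (1 - \<gamma>) / (1 - \<gamma>)))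
           * ((T / real N)\<^sup>2 + mesh_h a b M powr (4 - \<gamma>))"
  proof -
  define \<tau> where "\<tau> = T / real N"
  define n where "n = 2 * M - 1"
  define I where "I = {1..n}"
  define h where "h = mesh_h a b M"
  define Ca where "Ca = 2 * (b - a) powr (1 - \<gamma>) / (1 - \<gamma>)"
  define Bd where "Bd = C_R * (\<tau>\<^sup>2 + h powr (4 - \<gamma>))"
  define \<rho> where "\<rho> = exp (\<tau> * Ca)"
  define A where "A = Acoll a b \<gamma> M"
  define S where "S = (\<lambda>i. \<Sum>j \<in> I - {i}. \<bar>A i j\<bar>)"
  define e where "e = (\<lambda>k i. unodal a b M u \<tau> k i - U k i)"
  define E where "E = (\<lambda>k. Max ((\<lambda>i. \<bar>e k i\<bar>) ` I))"
  have \<tau>: "\<tau> > 0" using T N1 by (simp add: \<tau>_def)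
  have hpos: "h > 0" using ab M2 by (simp add: h_def mesh_h_def)
  have finI: "finite I" and neI: "I \<noteq> {}" using M2 by (auto simp: I_def n_def)
  have Ele: "\<bar>e k i\<bar> \<le> E k" if "i \<in> I" for k i
    unfolding E_def using finI that by (intro Max_ge) auto
  have Ein: "\<exists>i\<in>I. \<bar>e k i\<bar> = E k" for k
  proof -
    have "E k \<in> (\<lambda>i. \<bar>e k i\<bar>) ` I" unfolding E_def using finI neI by (intro Max_in) auto
    then show ?thesis by auto
  qed
  have E0: "E k \<ge> 0" for k using Ein[of k] by force
  have CR: "C_R \<ge> 0"
  proof -
    have "1 \<in> {1..N}" "1 \<in> {1..2*M-1}" using N1 M2 by auto
    then have "\<bar>resid a b \<gamma> M u f (T / real N) 1 1\<bar> \<le> C_R * ((T / real N)\<^sup>2 + mesh_h a b M powr (4 - \<gamma>))"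
      using resbound by blast
    moreover have "(T / real N)\<^sup>2 + mesh_h a b M powr (4 - \<gamma>) > 0" using \<tau> by (simp add: \<tau>_def[symmetric] add_pos_nonneg)
    ultimately show ?thesis by (smt (verit) zero_le_mult_iff)
  qed
  have Bd0: "Bd \<ge> 0" using CR by (simp add: Bd_def)
  have Ca0: "Ca \<ge> 0" using gam ab by (simp add: Ca_def)
  have Dfacts: "0 < A i i \<and> S i < A i i \<and> A i i \<le> Ca" if iI: "i \<in> I" for i
  proof -
    define x where "x = xnode a b M (real i / 2)"
    have i1: "1 \<le> i" "i \<le> 2 * M - 1" using iI by (auto simp: I_def n_def)
    have "real i / 2 \<le> real M" using i1 by simp
    then have "real i / 2 * ((b - a) / real M) \<le> real M * ((b - a) / real M)"
      using ab by (intro mult_right_mono) auto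
    then have xb: "x \<le> b" using M2 by (simp add: x_def xnode_def mesh_h_def)
    have xa: "a \<le> x" using ab by (simp add: x_def xnode_def mesh_h_def)
    note K = kernel_int[OF xa xb gam]
    have d: "dcoef a b \<gamma> M i = ((x - a) powr (1 - \<gamma>) + (b - x) powr (1 - \<gamma>)) / (1 - \<gamma>)"
      unfolding dcoef_def x_def[symmetric] using K by (rule integral_unique)
    have p1: "(x - a) powr (1 - \<gamma>) \<le> (b - a) powr (1 - \<gamma>)"
      using xa xb gam by (intro powr_mono2) auto
    have p2: "(b - x) powr (1 - \<gamma>) \<le> (b - a) powr (1 - \<gamma>)"
      using xa xb gam by (intro powr_mono2) auto
    have dCa: "dcoef a b \<gamma> M i \<le> Ca" unfolding d Ca_def using p1 p2 gam
      by (intro divide_right_mono) auto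
    have gp: "gcoef a b \<gamma> M i i > 0" using gpos iI by (auto simp: I_def n_def)
    have gint: "(\<lambda>y. phi a b M i y / \<bar>x - y\<bar> powr \<gamma>) integrable_on {a..b}"
      using gp not_integrable_integral unfolding gcoef_def x_def by fastforce
    have gd: "gcoef a b \<gamma> M i i \<le> dcoef a b \<gamma> M i"
      unfolding gcoef_def dcoef_def x_def[symmetric]
    proof (rule integral_le[OF gint])
      show "(\<lambda>y. 1 / \<bar>x - y\<bar> powr \<gamma>) integrable_on {a..b}" using K by blast
      show "phi a b M i y / \<bar>x - y\<bar> powr \<gamma> \<le> 1 / \<bar>x - y\<bar> powr \<gamma>" for y
        using phi_le1[of a b M i y] ab M2 by (intro divide_right_mono) auto
    qed
    have Aii: "A i i = dcoef a b \<gamma> M i - gcoef a b \<gamma> M i i" by (simp add: A_def Acoll_def)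
    have dd: "\<bar>A i i\<bar> > S i" using diagdom iI by (auto simp: A_def S_def I_def n_def)
    have "S i \<ge> 0" unfolding S_def by (intro sum_nonneg) auto
    then show ?thesis using Aii dd gp gd dCa by auto
  qed
  have offd: "\<bar>Amul a b \<gamma> M v i - A i i * v i\<bar> \<le> S i * B"
    if iI: "i \<in> I" and vb: "\<And>j. j \<in> I \<Longrightarrow> \<bar>v j\<bar> \<le> B" for v i B
  proof -
    have "Amul a b \<gamma> M v i = A i i * v i + (\<Sum>j\<in>I - {i}. A i j * v j)"
      unfolding Amul_def A_def[symmetric] I_def[symmetric] n_def[symmetric]
      using finI iI by (simp add: sum.remove)
    moreover have "\<bar>\<Sum>j\<in>I - {i}. A i j * v j\<bar> \<le> (\<Sum>j\<in>I - {i}. \<bar>A i j\<bar> * B)"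
    proof -
      have "\<bar>\<Sum>j\<in>I - {i}. A i j * v j\<bar> \<le> (\<Sum>j\<in>I - {i}. \<bar>A i j * v j\<bar>)" by (rule sum_abs)
      also have "\<dots> \<le> (\<Sum>j\<in>I - {i}. \<bar>A i j\<bar> * B)"
        by (intro sum_mono) (auto simp: abs_mult intro!: mult_left_mono vb)
      finally show ?thesis .
    qed
    ultimately show ?thesis by (simp add: S_def sum_distrib_right)
  qed
  have Alin: "Amul a b \<gamma> M (e k) i = Amul a b \<gamma> M (unodal a b M u \<tau> k) i - Amul a b \<gamma> M (U k) i" for k i
    unfolding Amul_def e_def by (simp add: algebra_simps sum_subtractf)
  have erreq: "e k i + \<tau>/2 * Amul a b \<gamma> M (e k) i
      = e (k-1) i - \<tau>/2 * Amul a b \<gamma> M (e (k-1)) i + \<tau> * resid a b \<gamma> M u f \<tau> k i"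
    if kN: "k \<in> {1..N}" and iI: "i \<in> I" for k i
  proof -
    have sch: "U k i + \<tau> / 2 * Amul a b \<gamma> M (U k) i
        = U (k - 1) i - \<tau> / 2 * Amul a b \<gamma> M (U (k - 1)) i
          + \<tau> * Fsrc a b M f \<tau> k i + \<tau> * Kbd a b \<gamma> M u \<tau> k i"
      using scheme kN iI unfolding CN_solution_def \<tau>_def I_def n_def by blast
    have res: "\<tau> * resid a b \<gamma> M u f \<tau> k i =
      ((unodal a b M u \<tau> k i + \<tau> / 2 * Amul a b \<gamma> M (unodal a b M u \<tau> k) i)
     - (unodal a b M u \<tau> (k - 1) i - \<tau> / 2 * Amul a b \<gamma> M (unodal a b M u \<tau> (k - 1)) i)
     - \<tau> * Fsrc a b M f \<tau> k i - \<tau> * Kbd a b \<gamma> M u \<tau> k i)"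
      unfolding resid_def using \<tau> by simp
    show ?thesis using sch res unfolding Alin by (simp add: e_def algebra_simps)
  qed
  have Rb: "\<bar>resid a b \<gamma> M u f \<tau> k i\<bar> \<le> Bd" if "k \<in> {1..N}" "i \<in> I" for k i
    using resbound that unfolding Bd_def \<tau>_def h_def I_def n_def by blast
  have step: "E k \<le> \<rho> * E (k - 1) + \<tau> * Bd" if kN: "k \<in> {1..N}" for k
  proof -
    obtain i where iI: "i \<in> I" and xi: "\<bar>e k i\<bar> = E k" using Ein by blast
    define D where "D = A i i"
    define \<alpha> where "\<alpha> = \<tau> / 2"
    have \<alpha>: "\<alpha> > 0" using \<tau> by (simp add: \<alpha>_def)
    have DF: "0 < D" "S i < D" "D \<le> Ca" using Dfacts[OF iI] by (auto simp: D_def)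
    define r1 where "r1 = Amul a b \<gamma> M (e k) i - D * e k i"
    define r2 where "r2 = Amul a b \<gamma> M (e (k-1)) i - D * e (k-1) i"
    define R where "R = resid a b \<gamma> M u f \<tau> k i"
    have r1b: "\<bar>r1\<bar> \<le> S i * E k" unfolding r1_def D_def by (rule offd[OF iI Ele])
    have r2b: "\<bar>r2\<bar> \<le> S i * E (k-1)" unfolding r2_def D_def by (rule offd[OF iI Ele])
    have Rb': "\<bar>R\<bar> \<le> Bd" unfolding R_def by (rule Rb[OF kN iI])
    have x'b: "\<bar>e (k-1) i\<bar> \<le> E (k-1)" by (rule Ele[OF iI])
    have eq: "(1 + \<alpha> * D) * e k i + \<alpha> * r1 = (1 - \<alpha> * D) * e (k-1) i - \<alpha> * r2 + \<tau> * R"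
      using erreq[OF kN iI] unfolding r1_def r2_def R_def \<alpha>_def by (simp add: algebra_simps)
    have lhs: "(1 + \<alpha> * D) * E k - \<alpha> * (S i * E k) \<le> \<bar>(1 + \<alpha> * D) * e k i + \<alpha> * r1\<bar>"
    proof -
      have "\<bar>(1 + \<alpha> * D) * e k i\<bar> = (1 + \<alpha> * D) * E k" using \<alpha> DF xi by (simp add: abs_mult)
      moreover have "\<bar>\<alpha> * r1\<bar> \<le> \<alpha> * (S i * E k)" using \<alpha> r1b by (simp add: abs_mult)
      ultimately show ?thesis by linarith
    qed
    have rhs: "\<bar>(1 - \<alpha> * D) * e (k-1) i - \<alpha> * r2 + \<tau> * R\<bar>
               \<le> \<bar>1 - \<alpha> * D\<bar> * E (k-1) + \<alpha> * (S i * E (k-1)) + \<tau> * Bd"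
    proof -
      have "\<bar>(1 - \<alpha> * D) * e (k-1) i\<bar> \<le> \<bar>1 - \<alpha> * D\<bar> * E (k-1)"
        using x'b by (simp add: abs_mult mult_left_mono)
      moreover have "\<bar>\<alpha> * r2\<bar> \<le> \<alpha> * (S i * E (k-1))" using \<alpha> r2b by (simp add: abs_mult)
      moreover have "\<bar>\<tau> * R\<bar> \<le> \<tau> * Bd" using \<tau> Rb' by (simp add: abs_mult)
      ultimately show ?thesis by linarith
    qed
    have main: "(1 + \<alpha> * (D - S i)) * E k \<le> (\<bar>1 - \<alpha> * D\<bar> + \<alpha> * S i) * E (k-1) + \<tau> * Bd"
    proof -
      have m0: "(1 + \<alpha> * D) * E k - \<alpha> * (S i * E k) \<le> \<bar>1 - \<alpha> * D\<bar> * E (k-1) + \<alpha> * (S i * E (k-1)) + \<tau> * Bd"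
        using lhs rhs unfolding eq by linarith
      have "(1 + \<alpha> * (D - S i)) * E k = (1 + \<alpha> * D) * E k - \<alpha> * (S i * E k)" by (simp add: algebra_simps)
      moreover have "(\<bar>1 - \<alpha> * D\<bar> + \<alpha> * S i) * E (k-1) = \<bar>1 - \<alpha> * D\<bar> * E (k-1) + \<alpha> * (S i * E (k-1))" by (simp add: algebra_simps)
      ultimately show ?thesis using m0 by linarith
    qed
    have Ek: "E k \<le> (1 + \<alpha> * (D - S i)) * E k"
    proof -
      have "0 \<le> \<alpha> * (D - S i) * E k" using E0[of k] \<alpha> DF by simp
      then show ?thesis by (simp add: algebra_simps)
    qed
    have rho1: "1 + \<tau> * Ca \<le> \<rho>" unfolding \<rho>_def by (rule exp_ge_add_one_self)
    have coef: "\<bar>1 - \<alpha> * D\<bar> + \<alpha> * S i \<le> \<rho>"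
    proof (cases "\<alpha> * D \<le> 1")
      case True
      have "\<alpha> * S i \<le> \<alpha> * D" using \<alpha> DF by simp
      then show ?thesis using True rho1 \<tau> Ca0 by (smt (verit) mult_nonneg_nonneg)
    next
      case False
      have "\<alpha> * S i \<le> \<alpha> * D" using \<alpha> DF by simp
      moreover have "\<alpha> * D \<le> \<alpha> * Ca" using \<alpha> DF by simp
      ultimately show ?thesis using False rho1 unfolding \<alpha>_def by auto
    qed
    have "(\<bar>1 - \<alpha> * D\<bar> + \<alpha> * S i) * E (k-1) \<le> \<rho> * E (k-1)"
      using coef E0 by (rule mult_right_mono)
    then show ?thesis using main Ek by linarith
  qed
  have e0: "E 0 = 0"
  proof -
    have "e 0 i = 0" if "i \<in> I" for i
    proof -
      have i1: "1 \<le> i" "i \<le> 2 * M - 1" using that by (auto simp: I_def n_def)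
      have "real i / 2 \<le> real M" using i1 by simp
      then have "real i / 2 * ((b - a) / real M) \<le> real M * ((b - a) / real M)"
        using ab by (intro mult_right_mono) auto
      then have "xnode a b M (real i / 2) \<in> {a..b}" using M2 ab by (simp add: xnode_def mesh_h_def)
      then show ?thesis using init scheme that
        unfolding e_def unodal_def CN_solution_def I_def n_def by auto
    qed
    then show ?thesis using Ein[of 0] by force
  qed
  have \<rho>1: "\<rho> \<ge> 1" using \<tau> Ca0 by (simp add: \<rho>_def)
  have ind: "k \<le> N \<Longrightarrow> E k \<le> real k * \<tau> * Bd * \<rho> ^ k" for k
  proof (induction k)
    case 0 then show ?case using e0 by simp
  next
    case (Suc k)
    have "E (Suc k) \<le> \<rho> * E k + \<tau> * Bd" using step[of "Suc k"] Suc.prems by simp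
    also have "\<dots> \<le> \<rho> * (real k * \<tau> * Bd * \<rho> ^ k) + \<tau> * Bd * \<rho> ^ (Suc k)"
    proof -
      have "\<rho> * E k \<le> \<rho> * (real k * \<tau> * Bd * \<rho> ^ k)"
        using Suc \<rho>1 by (intro mult_left_mono) auto
      moreover have "\<tau> * Bd * 1 \<le> \<tau> * Bd * \<rho> ^ (Suc k)"
        using \<rho>1 \<tau> Bd0 by (intro mult_left_mono) (auto simp del: power_Suc intro: one_le_power)
      ultimately show ?thesis by simp
    qed
    also have "\<dots> = real (Suc k) * \<tau> * Bd * \<rho> ^ Suc k" by (simp add: algebra_simps)
    finally show ?case .
  qed
  show ?thesis
  proof
    fix k assume kN: "k \<in> {0..N}"
    have kt: "real k * \<tau> \<le> T" using kN T N1 by (auto simp: \<tau>_def field_simps)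
    have kt0: "real k * \<tau> \<ge> 0" using \<tau> by simp
    have "\<rho> ^ k = exp (real k * \<tau> * Ca)" by (simp add: \<rho>_def exp_of_nat_mult[symmetric] mult.assoc)
    also have "\<dots> \<le> exp (T * Ca)" using kt Ca0 by (simp add: mult_right_mono)
    finally have rk: "\<rho> ^ k \<le> exp (T * Ca)" .
    have "E k \<le> real k * \<tau> * Bd * \<rho> ^ k" using ind kN by simp
    also have "\<dots> \<le> T * Bd * exp (T * Ca)"
      using kt kt0 Bd0 rk \<rho>1 by (intro mult_mono) (auto intro: mult_right_mono)
    finally have "E k \<le> C_R * T * exp (T * Ca) * (\<tau>\<^sup>2 + h powr (4 - \<gamma>))"
      by (simp add: Bd_def algebra_simps)
    then show "Max ((\<lambda>i. \<bar>u (xnode a b M (real i / 2)) (real k * (T / real N)) - U k i\<bar>) ` {1..2 * M - 1})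
       \<le> C_R * T * exp (T * (2 * (b - a) powr (1 - \<gamma>) / (1 - \<gamma>)))
           * ((T / real N)\<^sup>2 + mesh_h a b M powr (4 - \<gamma>))"
      unfolding E_def e_def unodal_def I_def n_def \<tau>_def Ca_def h_def by simp
  qed
qed

end
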